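(* Let $\Gamma$ be a countably infinite group acting minimally and continuously on a compact metrizable space $X$ with more than one orbit, let $x_1\in X$ have trivial stabilizer, and let $f:X\setminus\{x_1\}\to\{1,-1\}$ be continuous and not continuously extendable to $X$. Let $\pi_f:X_f\to X$ be the McMahon extension with continuous function $\tilde f:X_f\to\{1,-1\}$, and set $X_{f,+}=\tilde f^{-1}(1)$, $X_{f,-}=\tilde f^{-1}(-1)$. Then $\Gamma\curvearrowright X_f$ is null if and only if $\Gamma\curvearrowright X$ is null and the pair $(X_{f,+},X_{f,-})$ does not have arbitrarily large finite independence sets.
   Context: McMahon extension: $\Gamma\curvearrowright X_f$ is a minimal continuous action on a compact metrizable space with a $\Gamma$-equivariant continuous surjection $\pi_f:X_f\to X$ such that $\pi_f^{-1}(x)$ is a single point for $x\notin\Gamma x_1$ and two points for $x\in\Gamma x_1$, and $\tilde f$ is the continuous extension to $X_f$ of $f\circ\pi_f$ on $X_f\setminus\pi_f^{-1}(x_1)$; this extension is unique up to conjugacy (constructed as the quotient of the Stone–Čech compactification $W$ of an orbit $\Gamma x_0$, $x_0\notin\Gamma x_1$, by $w_1\sim w_2$ iff they have the same image in $X$ and $f_W(sw_1)=f_W(sw_2)$ for all $s$, $f_W$ the extension of $f$). A set $M\subseteq\Gamma$ is an independence set for $(A_1,A_2)$ if $\bigcap_{s\in F}s^{-1}A_{\omega(s)}\ne\emptyset$ for every nonempty finite $F\subseteq M$ and $\omega\in\{1,2\}^F$. Null: every sequence entropy $\limsup_n\frac1n\log N(\bigvee_{i=1}^n s_i^{-1}\mathcal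 U)$ vanishes, for all sequences $\{s_n\}\subseteq\Gamma$ and finite open covers $\mathcal U$. *)

theory Defs
  imports "HOL-Analysis.Analysis" "HOL-Algebra.Group"
begin

definition cont_action :: "('g, 'b) monoid_scheme \<Rightarrow> 'x topology \<Rightarrow> ('g \<Rightarrow> 'x \<Rightarrow> 'x) \<Rightarrow> bool" where
  "cont_action G X T \<longleftrightarrow>
     (\<forall>g\<in>carrier G. continuous_map X X (T g)) \<and>
     (\<forall>x\<in>topspace X. T \<one>\<^bsub>G\<^esub> x = x) \<and>
     (\<forall>g\<in>carrier G. \<forall>h\<in>carrier G. \<forall>x\<in>topspace X. T (g \<otimes>\<^bsub>G\<^esub> h) x = T g (T h x))"

definition orbit :: "('g, 'b) monoid_scheme \<Rightarrow> ('g \<Rightarrow> 'x \<Rightarrow> 'x) \<Rightarrow> 'x \<Rightarrow> 'x set" where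
  "orbit G T x = {T g x | g. g \<in> carrier G}"

definition minimal_action :: "('g, 'b) monoid_scheme \<Rightarrow> 'x topology \<Rightarrow> ('g \<Rightarrow> 'x \<Rightarrow> 'x) \<Rightarrow> bool" where
  "minimal_action G X T \<longleftrightarrow> (\<forall>x\<in>topspace X. X closure_of (orbit G T x) = topspace X)"

definition act_pre :: "'x topology \<Rightarrow> ('g \<Rightarrow> 'x \<Rightarrow> 'x) \<Rightarrow> 'g \<Rightarrow> 'x set \<Rightarrow> 'x set" where
  "act_pre X T s A = {y \<in> topspace X. T s y \<in> A}"

definition finite_open_cover :: "'x topology \<Rightarrow> 'x set set \<Rightarrow> bool" where
  "finite_open_cover X U \<longleftrightarrow> finite U \<and> (\<forall>V\<in>U. openin X V) \<and> topspace X \<subseteq> \<Union>U"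

definition Ncov :: "'x topology \<Rightarrow> 'x set set \<Rightarrow> nat" where
  "Ncov X C = Inf {card V | V. V \<subseteq> C \<and> finite V \<and> topspace X \<subseteq> \<Union>V}"

definition join_cover :: "'x topology \<Rightarrow> ('g \<Rightarrow> 'x \<Rightarrow> 'x) \<Rightarrow> (nat \<Rightarrow> 'g) \<Rightarrow> nat \<Rightarrow> 'x set set \<Rightarrow> 'x set set" where
  "join_cover X T s n U =
     (\<lambda>W. topspace X \<inter> (\<Inter>i\<in>{1..n}. act_pre X T (s i) (W i))) ` ({1..n} \<rightarrow> U)"

definition seq_entropy :: "'x topology \<Rightarrow> ('g \<Rightarrow> 'x \<Rightarrow> 'x) \<Rightarrow> (nat \<Rightarrow> 'g) \<Rightarrow> 'x set set \<Rightarrow> ereal" where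
  "seq_entropy X T s U =
     limsup (\<lambda>n. ereal (ln (real (Ncov X (join_cover X T s n U))) / real n))"

definition null_action :: "('g, 'b) monoid_scheme \<Rightarrow> 'x topology \<Rightarrow> ('g \<Rightarrow> 'x \<Rightarrow> 'x) \<Rightarrow> bool" where
  "null_action G X T \<longleftrightarrow>
     (\<forall>s U. (\<forall>n. s n \<in> carrier G) \<longrightarrow> finite_open_cover X U \<longrightarrow> seq_entropy X T s U = 0)"

definition indep_set :: "('g, 'b) monoid_scheme \<Rightarrow> 'x topology \<Rightarrow> ('g \<Rightarrow> 'x \<Rightarrow> 'x) \<Rightarrow> 'x set \<Rightarrow> 'x set \<Rightarrow> 'g set \<Rightarrow> bool" where
  "indep_set G X T A1 A2 M \<longleftrightarrow> M \<subseteq> carrier G \<and>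
     (\<forall>F. F \<subseteq> M \<longrightarrow> finite F \<longrightarrow> F \<noteq> {} \<longrightarrow>
        (\<forall>\<omega> \<in> F \<rightarrow> {1::nat, 2}.
           (\<Inter>s\<in>F. act_pre X T s (if \<omega> s = 1 then A1 else A2)) \<noteq> {}))"

definition arb_large_indep :: "('g, 'b) monoid_scheme \<Rightarrow> 'x topology \<Rightarrow> ('g \<Rightarrow> 'x \<Rightarrow> 'x) \<Rightarrow> 'x set \<Rightarrow> 'x set \<Rightarrow> bool" where
  "arb_large_indep G X T A1 A2 \<longleftrightarrow>
     (\<forall>n::nat. \<exists>M. finite M \<and> card M \<ge> n \<and> indep_set G X T A1 A2 M)"

definition mcmahon_ext ::
  "('g, 'b) monoid_scheme \<Rightarrow> 'x topology \<Rightarrow> ('g \<Rightarrow> 'x \<Rightarrow> 'x) \<Rightarrow> 'x \<Rightarrow> ('x \<Rightarrow> real)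
   \<Rightarrow> 'z topology \<Rightarrow> ('g \<Rightarrow> 'z \<Rightarrow> 'z) \<Rightarrow> ('z \<Rightarrow> 'x) \<Rightarrow> ('z \<Rightarrow> real) \<Rightarrow> bool" where
  "mcmahon_ext G X T x1 f Xf Tf pf ft \<longleftrightarrow>
     compact_space Xf \<and> metrizable_space Xf \<and>
     cont_action G Xf Tf \<and> minimal_action G Xf Tf \<and>
     continuous_map Xf X pf \<and> pf ` topspace Xf = topspace X \<and>
     (\<forall>g\<in>carrier G. \<forall>z\<in>topspace Xf. pf (Tf g z) = T g (pf z)) \<and>
     (\<forall>x\<in>topspace X - orbit G T x1. card {z\<in>topspace Xf. pf z = x} = 1) \<and>
     (\<forall>x\<in>orbit G T x1. card {z\<in>topspace Xf. pf z = x} = 2) \<and>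
     continuous_map Xf euclideanreal ft \<and>
     (\<forall>z\<in>topspace Xf. pf z \<noteq> x1 \<longrightarrow> ft z = f (pf z))"

end

theory Submission
  imports Defs
begin



lemma compact_fin_sub:
  assumes "compactin X S" "\<And>w. w \<in> S \<Longrightarrow> openin X (Op w) \<and> w \<in> Op w"
  shows "\<exists>W. finite W \<and> W \<subseteq> S \<and> S \<subseteq> (\<Union>w\<in>W. Op w)"
proof -
  have "S \<subseteq> \<Union>(Op ` S)" using assms(2) by blast
  moreover have "\<forall>U\<in>Op ` S. openin X U" using assms(2) by blast
  ultimately obtain F where F: "finite F" "F \<subseteq> Op ` S" "S \<subseteq> \<Union>F"
    using assms(1) unfolding compactin_def by meson
  then obtain W where "W \<subseteq> S" "finite W" "F = Op ` W" by (meson finite_subset_image)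
  then show ?thesis using F by blast
qed

lemma openin_conj:
  assumes "finite K" "openin X S" "\<And>k. k \<in> K \<Longrightarrow> openin X {y\<in>topspace X. P k y}"
  shows "openin X {y\<in>S. \<forall>k\<in>K. P k y}"
  using assms
proof (induction K rule: finite_induct)
  case empty then show ?case by simp
next
  case (insert k K)
  have "{y\<in>S. \<forall>k'\<in>insert k K. P k' y} = {y\<in>S. \<forall>k\<in>K. P k y} \<inter> {y\<in>topspace X. P k y}"
    using openin_subset[OF insert.prems(1)] by auto
  moreover have "openin X {y\<in>S. \<forall>k\<in>K. P k y}"
    by (rule insert.IH) (use insert.prems in auto)
  moreover have "openin X {y\<in>topspace X. P k y}" using insert.prems by auto
  ultimately show ?case by (simp add: openin_Int)
qed

lemma level_open:
  assumes "continuous_map X euclideanreal g" "\<forall>y\<in>topspace X. g y \<in> {1,-1}" "c \<in> {1,-1::real}"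
  shows "openin X {y\<in>topspace X. g y = c}"
proof -
  have "{y\<in>topspace X. g y = c} = {y\<in>topspace X. g y \<in> ball c 1}"
    using assms(2,3) by (auto simp: dist_real_def)
  moreover have "openin X {y\<in>topspace X. g y \<in> ball c 1}"
    by (rule openin_continuous_map_preimage[OF assms(1)]) simp
  ultimately show ?thesis by simp
qed

lemma join_finite:
  assumes "finite U"
  shows "finite (join_cover X T s n U)"
proof -
  have "join_cover X T s n U \<subseteq> (\<lambda>W. topspace X \<inter> (\<Inter>i\<in>{1..n}. act_pre X T (s i) (W i))) ` ({1..n} \<rightarrow>\<^sub>E U)"
  proof
    fix c assume "c \<in> join_cover X T s n U"
    then obtain W where W: "W \<in> {1..n} \<rightarrow> U" "c = topspace X \<inter> (\<Inter>i\<in>{1..n}. act_pre X T (s i) (W i))"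
      unfolding join_cover_def by blast
    have "restrict W {1..n} \<in> {1..n} \<rightarrow>\<^sub>E U" using W(1) by auto
    moreover have "c = topspace X \<inter> (\<Inter>i\<in>{1..n}. act_pre X T (s i) (restrict W {1..n} i))"
      using W(2) by simp
    ultimately show "c \<in> (\<lambda>W. topspace X \<inter> (\<Inter>i\<in>{1..n}. act_pre X T (s i) (W i))) ` ({1..n} \<rightarrow>\<^sub>E U)"
      by blast
  qed
  moreover have "finite ({1..n} \<rightarrow>\<^sub>E U)" using assms by (intro finite_PiE) auto
  ultimately show ?thesis by (rule finite_subset[OF _ finite_imageI])
qed

lemma join_covers:
  assumes "\<And>i y. y \<in> topspace X \<Longrightarrow> T (s i) y \<in> topspace X" "topspace X \<subseteq> \<Union>U"
  shows "topspace X \<subseteq> \<Union>(join_cover X T s n U)"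
proof
  fix y assume y: "y \<in> topspace X"
  define W where "W = (\<lambda>i. SOME u. u \<in> U \<and> T (s i) y \<in> u)"
  have W: "W i \<in> U \<and> T (s i) y \<in> W i" for i
    unfolding W_def by (rule someI_ex) (use assms y in blast)
  then have "W \<in> {1..n} \<rightarrow> U" by blast
  moreover have "y \<in> topspace X \<inter> (\<Inter>i\<in>{1..n}. act_pre X T (s i) (W i))"
    using y W by (auto simp: act_pre_def)
  ultimately show "y \<in> \<Union>(join_cover X T s n U)" unfolding join_cover_def by blast
qed

lemma Ncov_mem:
  assumes "finite C" "topspace X \<subseteq> \<Union>C"
  shows "\<exists>D\<subseteq>C. finite D \<and> topspace X \<subseteq> \<Union>D \<and> card D = Ncov X C"
proof -
  let ?S = "{card V | V. V \<subseteq> C \<and> finite V \<and> topspace X \<subseteq> \<Union>V}"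
  have "?S \<noteq> {}" using assms by blast
  then have "Ncov X C \<in> ?S" unfolding Ncov_def by (rule Inf_nat_def1)
  then obtain D where "Ncov X C = card D" "D \<subseteq> C" "finite D" "topspace X \<subseteq> \<Union>D"
    by blast
  then show ?thesis by metis
qed

lemma Ncov_le:
  assumes "D \<subseteq> C" "finite D" "topspace X \<subseteq> \<Union>D"
  shows "Ncov X C \<le> card D"
  unfolding Ncov_def using assms by (intro cInf_lower) blast+

lemma ln_nat_nonneg: "0 \<le> ln (real (m::nat))"
  by (cases "m = 0") auto

lemma limsup_nonneg:
  "0 \<le> limsup (\<lambda>n. ereal (ln (real (N n :: nat)) / real n))"
proof -
  have "limsup (\<lambda>n::nat. (0::ereal)) \<le> limsup (\<lambda>n. ereal (ln (real (N n :: nat)) / real n))"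
    by (intro Limsup_mono always_eventually allI) (simp add: ln_nat_nonneg)
  then show ?thesis by (simp add: Limsup_const)
qed




lemma lim_c: "(\<lambda>n. real d * ln (real k * real n + 1) / real n) \<longlonglongrightarrow> 0"
proof (rule tendsto_sandwich[where f="\<lambda>n. 0" and h="\<lambda>n. real d * (ln (real k + 1) / real n + ln (real n) / real n)"])
  show "\<forall>\<^sub>F n in sequentially. 0 \<le> real d * ln (real k * real n + 1) / real n"
    by (intro always_eventually allI) (simp add: ln_ge_zero)
  show "\<forall>\<^sub>F n in sequentially. real d * ln (real k * real n + 1) / real n
      \<le> real d * (ln (real k + 1) / real n + ln (real n) / real n)"
  proof (rule eventually_sequentiallyI[of 1])
    fix n :: nat assume n: "1 \<le> n"
    have "real k * real n + 1 \<le> (real k + 1) * real n" using n by (simp add: algebra_simps)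
    moreover have "0 \<le> real k * real n" by simp
    ultimately have "ln (real k * real n + 1) \<le> ln ((real k + 1) * real n)"
      by (intro ln_mono) linarith+
    also have "\<dots> = ln (real k + 1) + ln (real n)" using n by (simp add: ln_mult)
    finally have "ln (real k * real n + 1) / real n \<le> ln (real k + 1) / real n + ln (real n) / real n"
      using n by (simp add: divide_right_mono add_divide_distrib[symmetric])
    then show "real d * ln (real k * real n + 1) / real n
      \<le> real d * (ln (real k + 1) / real n + ln (real n) / real n)"
      by (simp add: mult_left_mono times_divide_eq_right[symmetric] del: times_divide_eq_right)
  qed
  show "(\<lambda>n. 0::real) \<longlonglongrightarrow> 0" by simp
  have "(\<lambda>n. ln (real k + 1) / real n + ln (real n) / real n) \<longlonglongrightarrow> 0 + 0"
    by (intro tendsto_add lim_const_over_n lim_ln_over_n)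
  then show "(\<lambda>n. real d * (ln (real k + 1) / real n + ln (real n) / real n)) \<longlonglongrightarrow> 0"
    using tendsto_mult_right_zero by fastforce
qed

definition shatters :: "'a set set \<Rightarrow> 'a set \<Rightarrow> bool" where
  "shatters H F \<longleftrightarrow> (\<forall>A\<subseteq>F. \<exists>h\<in>H. h \<inter> F = A)"

lemma pajor:
  assumes "finite S" "H \<subseteq> Pow S"
  shows "card H \<le> card {F. F \<subseteq> S \<and> shatters H F}"
  using assms
proof (induction S arbitrary: H rule: finite_induct)
  case empty
  then have "H \<subseteq> {{}}" by auto
  show ?case
  proof (cases "H = {}")
    case True then show ?thesis by simp
  next
    case False
    then have "H = {{}}" using \<open>H \<subseteq> {{}}\<close> by auto
    then have "{F. F \<subseteq> {} \<and> shatters H F} = {{}}" by (auto simp: shatters_def)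
    then show ?thesis using \<open>H = {{}}\<close> by simp
  qed
next
  case (insert x S)
  define H0 where "H0 = {h\<in>H. x \<notin> h}"
  define H1 where "H1 = (\<lambda>h. h - {x}) ` {h\<in>H. x \<in> h}"
  have finH: "finite H" using insert(4) finite_subset[of H "Pow (insert x S)"] insert(1) by simp
  have H0S: "H0 \<subseteq> Pow S" using insert(4) H0_def by auto
  have H1S: "H1 \<subseteq> Pow S" using insert(4) H1_def by auto
  have H0u: "H0 \<union> H1 \<subseteq> Pow S" "H0 \<inter> H1 \<subseteq> Pow S" using H0S H1S by auto
  have eqH: "H = H0 \<union> {h\<in>H. x \<in> h}" by (auto simp: H0_def)
  have "card (H0 \<union> {h\<in>H. x \<in> h}) = card H0 + card {h\<in>H. x \<in> h}"
    by (rule card_Un_disjoint) (use finH in \<open>auto simp: H0_def\<close>)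
  then have "card H = card H0 + card {h\<in>H. x \<in> h}" using eqH by simp
  also have "card {h\<in>H. x \<in> h} = card H1"
    unfolding H1_def
  proof (rule card_image[symmetric], rule inj_onI)
    fix h h' assume "h \<in> {h\<in>H. x \<in> h}" "h' \<in> {h\<in>H. x \<in> h}" "h - {x} = h' - {x}"
    then show "h = h'" by (metis (no_types, lifting) insert_Diff mem_Collect_eq)
  qed
  also have "card H0 + card H1 = card (H0 \<union> H1) + card (H0 \<inter> H1)"
    by (rule card_Un_Int) (use finH in \<open>auto simp: H0_def H1_def\<close>)
  finally have cH: "card H = card (H0 \<union> H1) + card (H0 \<inter> H1)" .
  define Sh1 where "Sh1 = {F. F \<subseteq> S \<and> shatters (H0 \<union> H1) F}"
  define Sh2 where "Sh2 = {F. F \<subseteq> S \<and> shatters (H0 \<inter> H1) F}"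
  have "card (H0 \<union> H1) \<le> card Sh1" unfolding Sh1_def by (rule insert.IH[OF H0u(1)])
  moreover have "card (H0 \<inter> H1) \<le> card Sh2" unfolding Sh2_def by (rule insert.IH[OF H0u(2)])
  moreover have "card (insert x ` Sh2) = card Sh2"
  proof (rule card_image, rule inj_onI)
    fix F1 F2 assume "F1 \<in> Sh2" "F2 \<in> Sh2" "insert x F1 = insert x F2"
    moreover have "x \<notin> F1" "x \<notin> F2" using calculation(1,2) insert.hyps(2) by (auto simp: Sh2_def)
    ultimately show "F1 = F2" by (metis insert_ident)
  qed
  moreover have "Sh1 \<inter> insert x ` Sh2 = {}" using insert.hyps(2) by (auto simp: Sh1_def)
  moreover have "finite Sh1" unfolding Sh1_def
    by (rule finite_subset[of _ "Pow S"]) (use insert(1) in auto)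
  moreover have "finite Sh2" unfolding Sh2_def
    by (rule finite_subset[of _ "Pow S"]) (use insert(1) in auto)
  then have "finite (insert x ` Sh2)" by simp
  moreover have "Sh1 \<union> insert x ` Sh2 \<subseteq> {F. F \<subseteq> insert x S \<and> shatters H F}"
  proof
    fix F assume "F \<in> Sh1 \<union> insert x ` Sh2"
    then show "F \<in> {F. F \<subseteq> insert x S \<and> shatters H F}"
    proof
      assume F: "F \<in> Sh1"
      then have FS: "F \<subseteq> S" by (simp add: Sh1_def)
      have "shatters H F" unfolding shatters_def
      proof (intro allI impI)
        fix A assume "A \<subseteq> F"
        then obtain g where g: "g \<in> H0 \<union> H1" "g \<inter> F = A" using F unfolding Sh1_def shatters_def by blast
        then obtain h where "h \<in> H" "g = h - {x}" unfolding H0_def H1_def by blast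
        moreover have "x \<notin> F" using FS insert.hyps(2) by auto
        ultimately show "\<exists>h\<in>H. h \<inter> F = A" using g(2) by blast
      qed
      then show ?thesis using FS by auto
    next
      assume "F \<in> insert x ` Sh2"
      then obtain F' where F': "F = insert x F'" "F' \<subseteq> S" "shatters (H0 \<inter> H1) F'" by (auto simp: Sh2_def)
      have xF': "x \<notin> F'" using F'(2) insert.hyps(2) by auto
      have "shatters H F" unfolding shatters_def
      proof (intro allI impI)
        fix A assume A: "A \<subseteq> F"
        have "A - {x} \<subseteq> F'" using A F'(1) by blast
        then obtain h where h: "h \<in> H0 \<inter> H1" "h \<inter> F' = A - {x}"
          using F'(3) unfolding shatters_def by blast
        have xh: "x \<notin> h" "h \<in> H" using h(1) by (auto simp: H0_def)
        obtain h' where h': "h' \<in> H" "x \<in> h'" "h = h' - {x}" using h(1) unfolding H1_def by blast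
        then have ih: "insert x h \<in> H" by (simp add: insert_absorb)
        show "\<exists>h\<in>H. h \<inter> F = A"
        proof (cases "x \<in> A")
          case True
          then have "insert x h \<inter> F = A" using h(2) F'(1) xh by auto
          then show ?thesis using ih by blast
        next
          case False
          then have "h \<inter> F = A" using h(2) F'(1) xh by auto
          then show ?thesis using xh by blast
        qed
      qed
      then show ?thesis using F' by auto
    qed
  qed
  moreover have "finite {F. F \<subseteq> insert x S \<and> shatters H F}"
    by (rule finite_subset[of _ "Pow (insert x S)"]) (use insert(1) in auto)
  ultimately have "card Sh1 + card (insert x ` Sh2) = card (Sh1 \<union> insert x ` Sh2)"
    "card (Sh1 \<union> insert x ` Sh2) \<le> card {F. F \<subseteq> insert x S \<and> shatters H F}"
    by (metis card_Un_disjoint, metis card_mono)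
  then show ?case using cH \<open>card (H0 \<union> H1) \<le> card Sh1\<close> \<open>card (H0 \<inter> H1) \<le> card Sh2\<close>
    \<open>card (insert x ` Sh2) = card Sh2\<close> by linarith
qed

lemma small_sets_card:
  assumes "finite Q"
  shows "card {F. F \<subseteq> Q \<and> card F < d} \<le> (card Q + 1) ^ d"
proof -
  let ?L = "{xs. set xs \<subseteq> insert None (Some ` Q) \<and> length xs = d}"
  have "{F. F \<subseteq> Q \<and> card F < d} \<subseteq> (\<lambda>xs. {q. Some q \<in> set xs}) ` ?L"
  proof
    fix F assume F: "F \<in> {F. F \<subseteq> Q \<and> card F < d}"
    then have "finite F" using assms finite_subset by blast
    then obtain xs where xs: "set xs = F" "distinct xs" using finite_distinct_list by blast
    then have lx: "length xs < d" using F distinct_card by fastforce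
    define ys where "ys = map Some xs @ replicate (d - length xs) None"
    have "ys \<in> ?L" using xs F lx by (auto simp: ys_def)
    moreover have "F = {q. Some q \<in> set ys}" using xs by (auto simp: ys_def)
    ultimately show "F \<in> (\<lambda>xs. {q. Some q \<in> set xs}) ` ?L" by blast
  qed
  then have "card {F. F \<subseteq> Q \<and> card F < d} \<le> card ((\<lambda>xs. {q. Some q \<in> set xs}) ` ?L)"
    by (rule card_mono[rotated]) (auto intro!: finite_imageI finite_lists_length_eq simp: assms)
  also have "\<dots> \<le> card ?L" by (rule card_image_le) (auto intro!: finite_lists_length_eq simp: assms)
  also have "card ?L = (card (insert None (Some ` Q))) ^ d"
    by (rule card_lists_length_eq) (simp add: assms)
  also have "card (insert None (Some ` Q)) = card Q + 1"
    using assms by (simp add: card_image)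
  finally show ?thesis .
qed




locale mcx =
  fixes G :: "('g, 'b) monoid_scheme" and X :: "'x topology" and T :: "'g \<Rightarrow> 'x \<Rightarrow> 'x"
    and x1 :: 'x and f :: "'x \<Rightarrow> real"
    and Xf :: "'z topology" and Tf :: "'g \<Rightarrow> 'z \<Rightarrow> 'z" and pf :: "'z \<Rightarrow> 'x" and ft :: "'z \<Rightarrow> real"
  assumes grp: "group G" and cX: "compact_space X" and mX: "metrizable_space X"
    and act: "cont_action G X T" and x1: "x1 \<in> topspace X"
    and noext: "\<not> (\<exists>h. continuous_map X euclideanreal h \<and> (\<forall>x\<in>topspace X - {x1}. h x = f x))"
    and mc: "mcmahon_ext G X T x1 f Xf Tf pf ft"
    and ftv: "\<forall>z\<in>topspace Xf. ft z \<in> {1, -1}"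
begin

lemma cXf: "compact_space Xf" and HXf: "Hausdorff_space Xf" and actf: "cont_action G Xf Tf"
  and pfc: "continuous_map Xf X pf" and pfs: "pf ` topspace Xf = topspace X"
  and eqv: "\<And>g z. g \<in> carrier G \<Longrightarrow> z \<in> topspace Xf \<Longrightarrow> pf (Tf g z) = T g (pf z)"
  and fib1: "\<And>x. x \<in> topspace X - orbit G T x1 \<Longrightarrow> card {z\<in>topspace Xf. pf z = x} = 1"
  and fib2: "\<And>x. x \<in> orbit G T x1 \<Longrightarrow> card {z\<in>topspace Xf. pf z = x} = 2"
  and ftc: "continuous_map Xf euclideanreal ft"
  and ftf: "\<And>z. z \<in> topspace Xf \<Longrightarrow> pf z \<noteq> x1 \<Longrightarrow> ft z = f (pf z)"
  using mc unfolding mcmahon_ext_def by (auto intro: metrizable_imp_Hausdorff_space)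

lemma HX: "Hausdorff_space X" using mX by (rule metrizable_imp_Hausdorff_space)

lemma Tf_cont: "g \<in> carrier G \<Longrightarrow> continuous_map Xf Xf (Tf g)"
  using actf unfolding cont_action_def by blast

lemma Tf_top: "g \<in> carrier G \<Longrightarrow> z \<in> topspace Xf \<Longrightarrow> Tf g z \<in> topspace Xf"
  using continuous_map_image_subset_topspace[OF Tf_cont] by blast

lemma T_cont: "g \<in> carrier G \<Longrightarrow> continuous_map X X (T g)"
  using act unfolding cont_action_def by blast

lemma T_top: "g \<in> carrier G \<Longrightarrow> x \<in> topspace X \<Longrightarrow> T g x \<in> topspace X"
  using continuous_map_image_subset_topspace[OF T_cont] by blast

lemma Tf_mult: "g \<in> carrier G \<Longrightarrow> h \<in> carrier G \<Longrightarrow> z \<in> topspace Xf \<Longrightarrow> Tf (g \<otimes>\<^bsub>G\<^esub> h) z = Tf g (Tf h z)"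
  using actf unfolding cont_action_def by blast

lemma Tf_one: "z \<in> topspace Xf \<Longrightarrow> Tf \<one>\<^bsub>G\<^esub> z = z"
  using actf unfolding cont_action_def by blast

lemma T_mult: "g \<in> carrier G \<Longrightarrow> h \<in> carrier G \<Longrightarrow> x \<in> topspace X \<Longrightarrow> T (g \<otimes>\<^bsub>G\<^esub> h) x = T g (T h x)"
  using act unfolding cont_action_def by blast

lemma T_one: "x \<in> topspace X \<Longrightarrow> T \<one>\<^bsub>G\<^esub> x = x"
  using act unfolding cont_action_def by blast

lemma pf_top: "z \<in> topspace Xf \<Longrightarrow> pf z \<in> topspace X"
  using continuous_map_image_subset_topspace[OF pfc] by blast

lemma ftTc: "k \<in> carrier G \<Longrightarrow> continuous_map Xf euclideanreal (\<lambda>y. ft (Tf k y))"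
  using continuous_map_compose[OF Tf_cont ftc] by (simp add: o_def)

lemma ftTv: "k \<in> carrier G \<Longrightarrow> y \<in> topspace Xf \<Longrightarrow> ft (Tf k y) \<in> {1,-1}"
  using ftv Tf_top by blast

lemma level_k: "k \<in> carrier G \<Longrightarrow> c \<in> {1,-1} \<Longrightarrow> openin Xf {y\<in>topspace Xf. ft (Tf k y) = c}"
  by (rule level_open[OF ftTc]) (auto dest: ftTv)

lemma sep_x1:
  assumes z: "z \<in> topspace Xf" "z' \<in> topspace Xf" "pf z = x1" "pf z' = x1" "z \<noteq> z'"
  shows "ft z \<noteq> ft z'"
proof
  assume eq: "ft z = ft z'"
  have "x1 \<in> orbit G T x1" unfolding orbit_def using T_one[OF x1] grp
    by (metis (mono_tags, lifting) group.is_monoid mem_Collect_eq monoid.one_closed)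
  then have c2: "card {w\<in>topspace Xf. pf w = x1} = 2" by (rule fib2)
  have fin: "finite {w\<in>topspace Xf. pf w = x1}" using c2 by (metis card.infinite zero_neq_numeral)
  have fibeq: "{w\<in>topspace Xf. pf w = x1} = {z, z'}"
  proof (rule ccontr)
    assume ne: "{w\<in>topspace Xf. pf w = x1} \<noteq> {z, z'}"
    have sub: "{z, z'} \<subseteq> {w\<in>topspace Xf. pf w = x1}" using z by auto
    then have "{z, z'} \<subset> {w\<in>topspace Xf. pf w = x1}" using ne by blast
    then have "card {z, z'} < 2" using psubset_card_mono[OF fin] c2 by simp
    then show False using z(5) by simp
  qed
  define h where "h x = (if x = x1 then ft z else f x)" for x
  have hpf: "h (pf w) = ft w" if "w \<in> topspace Xf" for w
  proof (cases "pf w = x1")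
    case True
    then have "w = z \<or> w = z'" using fibeq that by blast
    then show ?thesis using True eq by (auto simp: h_def)
  next
    case False then show ?thesis using ftf[OF that False] by (simp add: h_def)
  qed
  have cm: "closed_map Xf X pf" using continuous_imp_closed_map[OF pfc cXf HX] .
  have "continuous_map X euclideanreal h"
    unfolding continuous_map_closedin
  proof (intro conjI allI impI)
    show "h \<in> topspace X \<rightarrow> topspace euclideanreal" by simp
    fix C :: "real set" assume C: "closedin euclideanreal C"
    have "{x \<in> topspace X. h x \<in> C} = pf ` {w\<in>topspace Xf. ft w \<in> C}"
      using pfs hpf pf_top by force
    moreover have "closedin Xf {w\<in>topspace Xf. ft w \<in> C}"
      using closedin_continuous_map_preimage[OF ftc C] .
    ultimately show "closedin X {x \<in> topspace X. h x \<in> C}" using cm unfolding closed_map_def by simp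
  qed
  moreover have "\<forall>x\<in>topspace X - {x1}. h x = f x" by (simp add: h_def)
  ultimately show False using noext by blast
qed

lemma sep:
  assumes z: "z \<in> topspace Xf" "z' \<in> topspace Xf" "pf z = pf z'" "z \<noteq> z'"
  shows "\<exists>k\<in>carrier G. ft (Tf k z) \<noteq> ft (Tf k z')"
proof -
  have "pf z \<in> orbit G T x1"
  proof (rule ccontr)
    assume "pf z \<notin> orbit G T x1"
    then have "card {w\<in>topspace Xf. pf w = pf z} = 1" using fib1 pf_top[OF z(1)] by blast
    then obtain a where "{w\<in>topspace Xf. pf w = pf z} = {a}" by (rule card_1_singletonE)
    moreover have "z \<in> {w\<in>topspace Xf. pf w = pf z}" "z' \<in> {w\<in>topspace Xf. pf w = pf z}" using z by auto
    ultimately show False using z(4) by auto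
  qed
  then obtain g where g: "g \<in> carrier G" "pf z = T g x1" unfolding orbit_def by blast
  define k where "k = inv\<^bsub>G\<^esub> g"
  have k: "k \<in> carrier G" "k \<otimes>\<^bsub>G\<^esub> g = \<one>\<^bsub>G\<^esub>" "g \<otimes>\<^bsub>G\<^esub> k = \<one>\<^bsub>G\<^esub>"
    using grp g(1) unfolding k_def by (auto simp: group.l_inv group.r_inv group.inv_closed)
  have p1: "pf (Tf k z) = x1" using eqv[OF k(1) z(1)] g T_mult[OF k(1) g(1) x1] k(2) T_one[OF x1] by simp
  have p2: "pf (Tf k z') = x1" using eqv[OF k(1) z(2)] g z(3) T_mult[OF k(1) g(1) x1] k(2) T_one[OF x1] by simp
  have "Tf k z \<noteq> Tf k z'"
  proof
    assume "Tf k z = Tf k z'"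
    then have "Tf g (Tf k z) = Tf g (Tf k z')" by simp
    then show False using Tf_mult[OF g(1) k(1)] z k(3) Tf_one by metis
  qed
  then have "ft (Tf k z) \<noteq> ft (Tf k z')" using sep_x1 Tf_top[OF k(1)] z p1 p2 by blast
  then show ?thesis using k(1) by blast
qed

end



context mcx begin

lemma cyl_open:
  assumes "finite K" "K \<subseteq> carrier G" "openin Xf S" "z \<in> topspace Xf"
  shows "openin Xf {y\<in>S. \<forall>k\<in>K. ft (Tf k y) = ft (Tf k z)}"
proof (rule openin_conj[OF assms(1,3)])
  fix k assume "k \<in> K"
  then show "openin Xf {y \<in> topspace Xf. ft (Tf k y) = ft (Tf k z)}"
    using assms(2,4) level_k ftTv by blast
qed

lemma pre_open: "openin X a \<Longrightarrow> openin Xf {y\<in>topspace Xf. pf y \<in> a}"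
  by (rule openin_continuous_map_preimage[OF pfc])

lemma basic_nbhd:
  assumes u: "openin Xf u" "z \<in> u"
  shows "\<exists>a K. openin X a \<and> pf z \<in> a \<and> finite K \<and> K \<subseteq> carrier G \<and>
     {y\<in>topspace Xf. pf y \<in> a \<and> (\<forall>k\<in>K. ft (Tf k y) = ft (Tf k z))} \<subseteq> u"
proof -
  have zt: "z \<in> topspace Xf" using u openin_subset by blast
  define S where "S = topspace Xf - u"
  have cS: "compactin Xf S" unfolding S_def
    by (rule closedin_compact_space[OF cXf]) (use u in auto)
  define Pr where "Pr w a K Q \<longleftrightarrow> openin X a \<and> pf z \<in> a \<and> finite K \<and> K \<subseteq> carrier G \<and> openin Xf Q \<and> w \<in> Q \<and>
        (\<forall>y\<in>topspace Xf. pf y \<in> a \<and> (\<forall>k\<in>K. ft (Tf k y) = ft (Tf k z)) \<longrightarrow> y \<notin> Q)" for w a K Q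
  have "\<forall>w\<in>S. \<exists>a K Q. openin X a \<and> pf z \<in> a \<and> finite K \<and> K \<subseteq> carrier G \<and> openin Xf Q \<and> w \<in> Q \<and>
        (\<forall>y\<in>topspace Xf. pf y \<in> a \<and> (\<forall>k\<in>K. ft (Tf k y) = ft (Tf k z)) \<longrightarrow> y \<notin> Q)"
  proof
    fix w assume w: "w \<in> S"
    then have wt: "w \<in> topspace Xf" and wz: "w \<noteq> z" using u(2) by (auto simp: S_def)
    show "\<exists>a K Q. openin X a \<and> pf z \<in> a \<and> finite K \<and> K \<subseteq> carrier G \<and> openin Xf Q \<and> w \<in> Q \<and>
        (\<forall>y\<in>topspace Xf. pf y \<in> a \<and> (\<forall>k\<in>K. ft (Tf k y) = ft (Tf k z)) \<longrightarrow> y \<notin> Q)"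
    proof (cases "pf w = pf z")
      case False
      have "pf z \<in> topspace X \<and> pf w \<in> topspace X \<and> pf z \<noteq> pf w"
        using pf_top[OF zt] pf_top[OF wt] False by auto
      then have "\<exists>A B. openin X A \<and> openin X B \<and> pf z \<in> A \<and> pf w \<in> B \<and> disjnt A B"
        using HX[unfolded Hausdorff_space_def, rule_format, of "pf z" "pf w"] by blast
      then obtain A B where AB: "openin X A" "openin X B" "pf z \<in> A" "pf w \<in> B" "disjnt A B"
        by blast
      have "openin Xf {y\<in>topspace Xf. pf y \<in> B}" by (rule pre_open[OF AB(2)])
      moreover have "w \<in> {y\<in>topspace Xf. pf y \<in> B}" using wt AB(4) by simp
      moreover have "\<forall>y\<in>topspace Xf. pf y \<in> A \<and> (\<forall>k\<in>{}. ft (Tf k y) = ft (Tf k z)) \<longrightarrow> y \<notin> {y\<in>topspace Xf. pf y \<in> B}"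
        using AB(5) by (auto simp: disjnt_def)
      ultimately show ?thesis using AB(1,3) by (intro exI[of _ A] exI[of _ "{}"] exI[of _ "{y\<in>topspace Xf. pf y \<in> B}"]) auto
    next
      case True
      then obtain k where k: "k \<in> carrier G" "ft (Tf k w) \<noteq> ft (Tf k z)" using sep[OF wt zt True wz] by blast
      have "openin Xf {y\<in>topspace Xf. ft (Tf k y) = ft (Tf k w)}" by (rule level_k[OF k(1) ftTv[OF k(1) wt]])
      moreover have "\<forall>y\<in>topspace Xf. pf y \<in> topspace X \<and> (\<forall>k\<in>{k}. ft (Tf k y) = ft (Tf k z)) \<longrightarrow> y \<notin> {y\<in>topspace Xf. ft (Tf k y) = ft (Tf k w)}"
        using k(2) by auto
      ultimately show ?thesis using k(1) wt pf_top[OF zt]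
        by (intro exI[of _ "topspace X"] exI[of _ "{k}"] exI[of _ "{y\<in>topspace Xf. ft (Tf k y) = ft (Tf k w)}"]) auto
    qed
  qed
  define Pr' where "Pr' w t \<longleftrightarrow> Pr w (fst t) (fst (snd t)) (snd (snd t))" for w t
  have "\<forall>w\<in>S. \<exists>t. Pr' w t" unfolding Pr'_def Pr_def using \<open>\<forall>w\<in>S. _\<close> by fastforce
  then obtain F where "\<forall>w\<in>S. Pr' w (F w)" using bchoice by blast
  then have F: "\<forall>w\<in>S. Pr w (fst (F w)) (fst (snd (F w))) (snd (snd (F w)))" unfolding Pr'_def by blast
  define a where "a w = fst (F w)" for w
  define K where "K w = fst (snd (F w))" for w
  define Op where "Op w = snd (snd (F w))" for w
  have P: "\<And>w. w \<in> S \<Longrightarrow> openin X (a w) \<and> pf z \<in> a w \<and> finite (K w) \<and> K w \<subseteq> carrier G \<and> openin Xf (Op w) \<and> w \<in> Op w \<and>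
        (\<forall>y\<in>topspace Xf. pf y \<in> a w \<and> (\<forall>k\<in>K w. ft (Tf k y) = ft (Tf k z)) \<longrightarrow> y \<notin> Op w)"
    using F unfolding Pr_def a_def K_def Op_def by blast
  have "\<exists>W. finite W \<and> W \<subseteq> S \<and> S \<subseteq> (\<Union>w\<in>W. Op w)"
  proof (rule compact_fin_sub[OF cS])
    fix w assume "w \<in> S" then show "openin Xf (Op w) \<and> w \<in> Op w" using P[of w] by simp
  qed
  then obtain W where W: "finite W" "W \<subseteq> S" "S \<subseteq> (\<Union>w\<in>W. Op w)" by blast
  define a0 where "a0 = {x\<in>topspace X. \<forall>w\<in>W. x \<in> a w}"
  define K0 where "K0 = (\<Union>w\<in>W. K w)"
  have "openin X a0" unfolding a0_def
  proof (rule openin_conj[OF W(1) openin_topspace])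
    fix w assume "w \<in> W"
    then have "openin X (a w)" using P W(2) by blast
    moreover have "{y \<in> topspace X. y \<in> a w} = a w" using openin_subset[OF calculation] by blast
    ultimately show "openin X {y \<in> topspace X. y \<in> a w}" by simp
  qed
  moreover have "pf z \<in> a0" unfolding a0_def using P W(2) pf_top[OF zt] by blast
  moreover have "finite K0" unfolding K0_def using P W(1,2) by blast
  moreover have "K0 \<subseteq> carrier G" unfolding K0_def using P W(2) by blast
  moreover have "{y\<in>topspace Xf. pf y \<in> a0 \<and> (\<forall>k\<in>K0. ft (Tf k y) = ft (Tf k z))} \<subseteq> u"
  proof
    fix y assume y: "y \<in> {y\<in>topspace Xf. pf y \<in> a0 \<and> (\<forall>k\<in>K0. ft (Tf k y) = ft (Tf k z))}"
    show "y \<in> u"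
    proof (rule ccontr)
      assume "y \<notin> u"
      then have "y \<in> S" using y by (simp add: S_def)
      then obtain w where w: "w \<in> W" "y \<in> Op w" using W(3) by blast
      have "pf y \<in> a w" using y w(1) by (simp add: a0_def)
      moreover have "\<forall>k\<in>K w. ft (Tf k y) = ft (Tf k z)" using y w(1) by (auto simp: K0_def)
      ultimately have "y \<notin> Op w" using P[of w] W(2) w(1) y by blast
      then show False using w(2) by simp
    qed
  qed
  ultimately show ?thesis by blast
qed

end



context mcx begin

lemma refine:
  assumes U: "finite_open_cover Xf U"
  shows "\<exists>V K. finite_open_cover X V \<and> finite K \<and> K \<subseteq> carrier G \<and>
     (\<forall>v\<in>V. \<forall>y0\<in>topspace Xf. pf y0 \<in> v \<longrightarrow>
        (\<exists>u\<in>U. \<forall>y\<in>topspace Xf. pf y \<in> v \<and> (\<forall>k\<in>K. ft (Tf k y) = ft (Tf k y0)) \<longrightarrow> y \<in> u))"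
proof -
  define Nb where "Nb a K z = {y\<in>{y\<in>topspace Xf. pf y \<in> a}. \<forall>k\<in>K. ft (Tf k y) = ft (Tf k z)}" for a K z
  define Pr where "Pr z t \<longleftrightarrow> fst t \<in> U \<and> openin X (fst (snd t)) \<and> pf z \<in> fst (snd t) \<and>
      finite (snd (snd t)) \<and> snd (snd t) \<subseteq> carrier G \<and> Nb (fst (snd t)) (snd (snd t)) z \<subseteq> fst t" for z t
  have "\<forall>z\<in>topspace Xf. \<exists>t. Pr z t"
  proof
    fix z assume z: "z \<in> topspace Xf"
    then obtain u where u: "u \<in> U" "z \<in> u" using U unfolding finite_open_cover_def by blast
    have "openin Xf u" using U u(1) unfolding finite_open_cover_def by blast
    from basic_nbhd[OF this u(2)] obtain a K where aK: "openin X a" "pf z \<in> a" "finite K" "K \<subseteq> carrier G"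
       "{y\<in>topspace Xf. pf y \<in> a \<and> (\<forall>k\<in>K. ft (Tf k y) = ft (Tf k z))} \<subseteq> u" by blast
    have "Nb a K z \<subseteq> u" using aK(5) unfolding Nb_def by blast
    then have "Pr z (u, a, K)" unfolding Pr_def using aK u by simp
    then show "\<exists>t. Pr z t" by blast
  qed
  then obtain F where F: "\<forall>z\<in>topspace Xf. Pr z (F z)" using bchoice by blast
  define uz where "uz z = fst (F z)" for z
  define az where "az z = fst (snd (F z))" for z
  define Kz where "Kz z = snd (snd (F z))" for z
  have P: "uz z \<in> U \<and> openin X (az z) \<and> pf z \<in> az z \<and> finite (Kz z) \<and> Kz z \<subseteq> carrier G \<and> Nb (az z) (Kz z) z \<subseteq> uz z"
    if "z \<in> topspace Xf" for z
    using F that unfolding Pr_def uz_def az_def Kz_def by blast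
  have NbO: "openin Xf (Nb (az z) (Kz z) z) \<and> z \<in> Nb (az z) (Kz z) z" if "z \<in> topspace Xf" for z
  proof
    show "openin Xf (Nb (az z) (Kz z) z)" unfolding Nb_def
      by (rule cyl_open) (use P[OF that] pre_open that in auto)
    show "z \<in> Nb (az z) (Kz z) z" unfolding Nb_def using P[OF that] that by simp
  qed
  have "\<exists>Z. finite Z \<and> Z \<subseteq> topspace Xf \<and> topspace Xf \<subseteq> (\<Union>z\<in>Z. Nb (az z) (Kz z) z)"
    by (rule compact_fin_sub) (use cXf NbO in \<open>auto simp: compact_space_def\<close>)
  then obtain Z0 where Z0: "finite Z0" "Z0 \<subseteq> topspace Xf" "topspace Xf \<subseteq> (\<Union>z\<in>Z0. Nb (az z) (Kz z) z)"
    by blast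
  define K where "K = (\<Union>z\<in>Z0. Kz z)"
  have K: "finite K" "K \<subseteq> carrier G" unfolding K_def using P Z0(1,2) by blast+
  define Cy where "Cy y1 = {y\<in>topspace Xf. \<forall>k\<in>K. ft (Tf k y) = ft (Tf k y1)}" for y1
  define Bad where "Bad x = topspace Xf - \<Union>(Cy ` {y1\<in>topspace Xf. pf y1 = x})" for x
  have Cyo: "openin Xf (Cy y1)" if "y1 \<in> topspace Xf" for y1
    unfolding Cy_def by (rule cyl_open[OF K openin_topspace that])
  have cm: "closed_map Xf X pf" using continuous_imp_closed_map[OF pfc cXf HX] .
  have Badc: "closedin X (pf ` Bad x)" for x
  proof -
    have "openin Xf (\<Union>(Cy ` {y1\<in>topspace Xf. pf y1 = x}))"
      by (rule openin_Union) (use Cyo in blast)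
    then have "closedin Xf (Bad x)" unfolding Bad_def by (simp add: closedin_diff)
    then show ?thesis using cm unfolding closed_map_def by blast
  qed
  define v where "v x = {x'\<in>topspace X - pf ` Bad x. \<forall>z\<in>{z\<in>Z0. x \<in> az z}. x' \<in> az z}" for x
  have vo: "openin X (v x)" for x unfolding v_def
  proof (rule openin_conj)
    show "finite {z\<in>Z0. x \<in> az z}" using Z0(1) by simp
    show "openin X (topspace X - pf ` Bad x)" using Badc by (simp add: openin_diff)
    fix z assume "z \<in> {z\<in>Z0. x \<in> az z}"
    then have "openin X (az z)" using P Z0(2) by blast
    moreover have "{y \<in> topspace X. y \<in> az z} = az z" using openin_subset[OF calculation] by blast
    ultimately show "openin X {y \<in> topspace X. y \<in> az z}" by simp
  qed
  have vx: "x \<in> v x" if "x \<in> topspace X" for x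
  proof -
    have "x \<notin> pf ` Bad x"
    proof
      assume "x \<in> pf ` Bad x"
      then obtain y where y: "y \<in> Bad x" "pf y = x" by blast
      then have "y \<in> topspace Xf" unfolding Bad_def by blast
      then have "y \<in> Cy y" unfolding Cy_def by simp
      then show False using y \<open>y \<in> topspace Xf\<close> unfolding Bad_def by blast
    qed
    then show ?thesis unfolding v_def using that by blast
  qed
  have "\<exists>X0. finite X0 \<and> X0 \<subseteq> topspace X \<and> topspace X \<subseteq> (\<Union>x\<in>X0. v x)"
    by (rule compact_fin_sub) (use cX vo vx in \<open>auto simp: compact_space_def\<close>)
  then obtain X0 where X0: "finite X0" "X0 \<subseteq> topspace X" "topspace X \<subseteq> (\<Union>x\<in>X0. v x)" by blast
  have "finite_open_cover X (v ` X0)" unfolding finite_open_cover_def using X0 vo by auto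
  moreover have "\<forall>vv\<in>v ` X0. \<forall>y0\<in>topspace Xf. pf y0 \<in> vv \<longrightarrow>
        (\<exists>u\<in>U. \<forall>y\<in>topspace Xf. pf y \<in> vv \<and> (\<forall>k\<in>K. ft (Tf k y) = ft (Tf k y0)) \<longrightarrow> y \<in> u)"
  proof (intro ballI impI)
    fix vv y0 assume vv: "vv \<in> v ` X0" and y0: "y0 \<in> topspace Xf" "pf y0 \<in> vv"
    then obtain x where x: "x \<in> X0" "vv = v x" by blast
    have "pf y0 \<notin> pf ` Bad x" using y0(2) x(2) unfolding v_def by blast
    then have "y0 \<notin> Bad x" by blast
    then obtain y1 where y1: "y1 \<in> topspace Xf" "pf y1 = x" "y0 \<in> Cy y1" using y0(1) unfolding Bad_def by blast
    obtain z where z: "z \<in> Z0" "y1 \<in> Nb (az z) (Kz z) z" using Z0(3) y1(1) by blast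
    have zt: "z \<in> topspace Xf" using z(1) Z0(2) by blast
    have xz: "x \<in> az z" using z(2) y1(2) unfolding Nb_def by blast
    show "\<exists>u\<in>U. \<forall>y\<in>topspace Xf. pf y \<in> vv \<and> (\<forall>k\<in>K. ft (Tf k y) = ft (Tf k y0)) \<longrightarrow> y \<in> u"
    proof (intro bexI[of _ "uz z"] ballI impI)
      show "uz z \<in> U" using P[OF zt] by blast
      fix y assume y: "y \<in> topspace Xf" "pf y \<in> vv \<and> (\<forall>k\<in>K. ft (Tf k y) = ft (Tf k y0))"
      have "pf y \<in> az z" using y(2) x(2) xz z(1) unfolding v_def by blast
      moreover have "ft (Tf k y) = ft (Tf k z)" if k: "k \<in> Kz z" for k
      proof -
        have kK: "k \<in> K" using k z(1) unfolding K_def by blast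
        have "ft (Tf k y) = ft (Tf k y0)" using y(2) kK by blast
        also have "\<dots> = ft (Tf k y1)" using y1(3) kK unfolding Cy_def by blast
        also have "\<dots> = ft (Tf k z)" using z(2) k unfolding Nb_def by blast
        finally show ?thesis .
      qed
      ultimately have "y \<in> Nb (az z) (Kz z) z" unfolding Nb_def using y(1) by blast
      then show "y \<in> uz z" using P[OF zt] by blast
    qed
  qed
  ultimately show ?thesis using K by blast
qed

end



context mcx begin

lemma mclosed: "g \<in> carrier G \<Longrightarrow> h \<in> carrier G \<Longrightarrow> g \<otimes>\<^bsub>G\<^esub> h \<in> carrier G"
  using grp by (simp add: group.is_monoid monoid.m_closed)

lemma pm_eq: "a \<in> {1,-1::real} \<Longrightarrow> b \<in> {1,-1} \<Longrightarrow> (a = 1 \<longleftrightarrow> b = 1) \<Longrightarrow> a = b"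
  by auto

lemma patterns_bound:
  assumes nd: "\<not> arb_large_indep G Xf Tf {z\<in>topspace Xf. ft z = 1} {z\<in>topspace Xf. ft z = -1}"
  shows "\<exists>d. \<forall>Q. finite Q \<longrightarrow> Q \<subseteq> carrier G \<longrightarrow>
     card ((\<lambda>y. {q\<in>Q. ft (Tf q y) = 1}) ` topspace Xf) \<le> (card Q + 1) ^ d"
proof -
  let ?Ap = "{z\<in>topspace Xf. ft z = 1}" and ?Am = "{z\<in>topspace Xf. ft z = -1}"
  obtain d where d: "\<And>M. finite M \<Longrightarrow> card M \<ge> d \<Longrightarrow> \<not> indep_set G Xf Tf ?Ap ?Am M"
    using nd unfolding arb_large_indep_def by blast
  show ?thesis
  proof (intro exI allI impI)
    fix Q assume Q: "finite Q" "Q \<subseteq> carrier G"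
    define R where "R = (\<lambda>y. {q\<in>Q. ft (Tf q y) = 1}) ` topspace Xf"
    have RQ: "R \<subseteq> Pow Q" unfolding R_def by blast
    have "card R \<le> card {F. F \<subseteq> Q \<and> shatters R F}" by (rule pajor[OF Q(1) RQ])
    also have "\<dots> \<le> card {F. F \<subseteq> Q \<and> card F < d}"
    proof (rule card_mono)
      show "finite {F. F \<subseteq> Q \<and> card F < d}" using Q(1) by simp
      show "{F. F \<subseteq> Q \<and> shatters R F} \<subseteq> {F. F \<subseteq> Q \<and> card F < d}"
      proof
        fix F assume F: "F \<in> {F. F \<subseteq> Q \<and> shatters R F}"
        then have FQ: "F \<subseteq> Q" and sh: "shatters R F" by auto
        have finF: "finite F" using FQ Q(1) finite_subset by blast
        have "indep_set G Xf Tf ?Ap ?Am F"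
          unfolding indep_set_def
        proof (intro conjI allI impI ballI)
          show "F \<subseteq> carrier G" using FQ Q(2) by blast
          fix F' \<omega> assume F': "F' \<subseteq> F" "finite F'" "F' \<noteq> {}" and om: "\<omega> \<in> F' \<rightarrow> {1::nat, 2}"
          define A where "A = {t\<in>F. t \<in> F' \<and> \<omega> t = 1}"
          have "A \<subseteq> F" unfolding A_def by blast
          then obtain h where h: "h \<in> R" "h \<inter> F = A" using sh unfolding shatters_def by blast
          then obtain y where y: "y \<in> topspace Xf" "h = {q\<in>Q. ft (Tf q y) = 1}" unfolding R_def by blast
          have "y \<in> act_pre Xf Tf t (if \<omega> t = 1 then ?Ap else ?Am)" if t: "t \<in> F'" for t
          proof -
            have tc: "t \<in> carrier G" "t \<in> F" "t \<in> Q" using t F'(1) FQ Q(2) by blast+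
            have Tt: "Tf t y \<in> topspace Xf" by (rule Tf_top[OF tc(1) y(1)])
            show ?thesis
            proof (cases "\<omega> t = 1")
              case True
              then have "t \<in> A" using t tc unfolding A_def by blast
              then have "t \<in> h" using h(2) by blast
              then have "ft (Tf t y) = 1" using y(2) by blast
              then show ?thesis using True Tt y(1) unfolding act_pre_def by simp
            next
              case False
              then have "t \<notin> A" unfolding A_def by blast
              then have "t \<notin> h" using h(2) tc(2) by blast
              then have "ft (Tf t y) \<noteq> 1" using y(2) tc(3) by blast
              then have "ft (Tf t y) = -1" using ftTv[OF tc(1) y(1)] by blast
              then show ?thesis using False Tt y(1) unfolding act_pre_def by simp
            qed
          qed
          then have "y \<in> (\<Inter>t\<in>F'. act_pre Xf Tf t (if \<omega> t = 1 then ?Ap else ?Am))" by blast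
          then show "(\<Inter>t\<in>F'. act_pre Xf Tf t (if \<omega> t = 1 then ?Ap else ?Am)) \<noteq> {}" by blast
        qed
        then have "card F < d" using d[OF finF] by linarith
        then show "F \<in> {F. F \<subseteq> Q \<and> card F < d}" using FQ by blast
      qed
    qed
    also have "\<dots> \<le> (card Q + 1) ^ d" by (rule small_sets_card[OF Q(1)])
    finally show "card ((\<lambda>y. {q\<in>Q. ft (Tf q y) = 1}) ` topspace Xf) \<le> (card Q + 1) ^ d"
      unfolding R_def .
  qed
qed

end



context mcx begin

lemma count_bound:
  assumes s: "\<forall>n. s n \<in> carrier G" and V: "finite_open_cover X V" and K: "finite K" "K \<subseteq> carrier G"
   and PV: "\<forall>v\<in>V. \<forall>y0\<in>topspace Xf. pf y0 \<in> v \<longrightarrow>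
        (\<exists>u\<in>U. \<forall>y\<in>topspace Xf. pf y \<in> v \<and> (\<forall>k\<in>K. ft (Tf k y) = ft (Tf k y0)) \<longrightarrow> y \<in> u)"
   and dB: "\<forall>Q. finite Q \<longrightarrow> Q \<subseteq> carrier G \<longrightarrow>
     card ((\<lambda>y. {q\<in>Q. ft (Tf q y) = 1}) ` topspace Xf) \<le> (card Q + 1) ^ d"
  shows "Ncov Xf (join_cover Xf Tf s n U) \<le> Ncov X (join_cover X T s n V) * (card K * n + 1) ^ d"
proof -
  have Vf: "finite V" and Vc: "topspace X \<subseteq> \<Union>V" using V unfolding finite_open_cover_def by auto
  have "\<exists>D\<subseteq>join_cover X T s n V. finite D \<and> topspace X \<subseteq> \<Union>D \<and> card D = Ncov X (join_cover X T s n V)"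
    by (rule Ncov_mem[OF join_finite[OF Vf] join_covers]) (use s T_top Vc in auto)
  then obtain C where C: "C \<subseteq> join_cover X T s n V" "finite C" "topspace X \<subseteq> \<Union>C"
    "card C = Ncov X (join_cover X T s n V)" by blast
  define Q where "Q = (\<lambda>(k,i). k \<otimes>\<^bsub>G\<^esub> s i) ` (K \<times> {1..n})"
  have Qf: "finite Q" unfolding Q_def using K(1) by simp
  have Qc: "Q \<subseteq> carrier G" unfolding Q_def using K(2) s mclosed by auto
  have cQ: "card Q \<le> card K * n" unfolding Q_def
    using card_image_le[of "K \<times> {1..n}" "\<lambda>(k,i). k \<otimes>\<^bsub>G\<^esub> s i"] K(1) by (simp add: card_cartesian_product)
  define ps where "ps y = {q\<in>Q. ft (Tf q y) = 1}" for y
  define R where "R = ps ` topspace Xf"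
  have "R \<subseteq> Pow Q" unfolding R_def ps_def by blast
  then have Rf: "finite R" using Qf finite_subset by blast
  have cR: "card R \<le> (card K * n + 1) ^ d"
  proof -
    have "card R \<le> (card Q + 1) ^ d" using dB Qf Qc unfolding R_def ps_def by blast
    also have "\<dots> \<le> (card K * n + 1) ^ d" using cQ by (simp add: power_mono)
    finally show ?thesis .
  qed
  define PP where "PP = {cp \<in> C \<times> R. \<exists>y0\<in>topspace Xf. pf y0 \<in> fst cp \<and> ps y0 = snd cp}"
  have key: "\<exists>e. e \<in> join_cover Xf Tf s n U \<and> (\<forall>y\<in>topspace Xf. pf y \<in> fst cp \<and> ps y = snd cp \<longrightarrow> y \<in> e)"
    if cp: "cp \<in> PP" for cp
  proof -
    obtain c p where cpe: "cp = (c, p)" by (cases cp)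
    have cC: "c \<in> C" and ex: "\<exists>y0\<in>topspace Xf. pf y0 \<in> c \<and> ps y0 = p" using cp unfolding PP_def cpe by auto
    then obtain y0 where y0: "y0 \<in> topspace Xf" "pf y0 \<in> c" "ps y0 = p" by blast
    have "c \<in> join_cover X T s n V" using cC C(1) by blast
    then obtain W where W: "W \<in> {1..n} \<rightarrow> V" "c = topspace X \<inter> (\<Inter>i\<in>{1..n}. act_pre X T (s i) (W i))"
      unfolding join_cover_def by blast
    define Gd where "Gd i u \<longleftrightarrow> u \<in> U \<and> (\<forall>y\<in>topspace Xf. pf y \<in> W i \<and> (\<forall>k\<in>K. ft (Tf k y) = ft (Tf k (Tf (s i) y0))) \<longrightarrow> y \<in> u)" for i u
    have "\<forall>i\<in>{1..n}. \<exists>u. Gd i u"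
    proof
      fix i assume i: "i \<in> {1..n}"
      have Wi: "W i \<in> V" using W(1) i by blast
      have t0: "Tf (s i) y0 \<in> topspace Xf" using Tf_top s y0(1) by blast
      have "pf (Tf (s i) y0) = T (s i) (pf y0)" using eqv s y0(1) by blast
      also have "\<dots> \<in> W i" using y0(2) W(2) i unfolding act_pre_def by blast
      finally have "pf (Tf (s i) y0) \<in> W i" .
      then show "\<exists>u. Gd i u" unfolding Gd_def using PV Wi t0 by blast
    qed
    then obtain uu0 where "\<forall>i\<in>{1..n}. Gd i (uu0 i)"
      using bchoice by blast
    then obtain uu where uu: "\<forall>i\<in>{1..n}. uu i \<in> U \<and> (\<forall>y\<in>topspace Xf. pf y \<in> W i \<and> (\<forall>k\<in>K. ft (Tf k y) = ft (Tf k (Tf (s i) y0))) \<longrightarrow> y \<in> uu i)"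
      unfolding Gd_def by blast
    define e where "e = topspace Xf \<inter> (\<Inter>i\<in>{1..n}. act_pre Xf Tf (s i) (uu i))"
    have "uu \<in> {1..n} \<rightarrow> U" using uu by blast
    then have "e \<in> join_cover Xf Tf s n U" unfolding join_cover_def e_def by blast
    moreover have "y \<in> e" if y: "y \<in> topspace Xf" "pf y \<in> c" "ps y = p" for y
    proof -
      have "Tf (s i) y \<in> uu i" if i: "i \<in> {1..n}" for i
      proof -
        have t1: "Tf (s i) y \<in> topspace Xf" using Tf_top s y(1) by blast
        have "pf (Tf (s i) y) = T (s i) (pf y)" using eqv s y(1) by blast
        also have "\<dots> \<in> W i" using y(2) W(2) i unfolding act_pre_def by blast
        finally have pW: "pf (Tf (s i) y) \<in> W i" .
        have "ft (Tf k (Tf (s i) y)) = ft (Tf k (Tf (s i) y0))" if k: "k \<in> K" for k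
        proof -
          have kc: "k \<in> carrier G" using k K(2) by blast
          have q: "k \<otimes>\<^bsub>G\<^esub> s i \<in> Q" unfolding Q_def using k i by force
          have qc: "k \<otimes>\<^bsub>G\<^esub> s i \<in> carrier G" using q Qc by blast
          have e1: "Tf k (Tf (s i) y) = Tf (k \<otimes>\<^bsub>G\<^esub> s i) y" using Tf_mult[OF kc s[rule_format] y(1)] by simp
          have e2: "Tf k (Tf (s i) y0) = Tf (k \<otimes>\<^bsub>G\<^esub> s i) y0" using Tf_mult[OF kc s[rule_format] y0(1)] by simp
          have "ps y = ps y0" using y(3) y0(3) by simp
          then have "(ft (Tf (k \<otimes>\<^bsub>G\<^esub> s i) y) = 1) = (ft (Tf (k \<otimes>\<^bsub>G\<^esub> s i) y0) = 1)"
            using q unfolding ps_def by blast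
          then have "ft (Tf (k \<otimes>\<^bsub>G\<^esub> s i) y) = ft (Tf (k \<otimes>\<^bsub>G\<^esub> s i) y0)"
            using pm_eq ftTv[OF qc y(1)] ftTv[OF qc y0(1)] by blast
          then show ?thesis using e1 e2 by simp
        qed
        then show ?thesis using uu i t1 pW by blast
      qed
      then show "y \<in> e" unfolding e_def act_pre_def using y(1) by blast
    qed
    ultimately show ?thesis unfolding cpe by auto
  qed
  define Ge where "Ge cp e \<longleftrightarrow> e \<in> join_cover Xf Tf s n U \<and> (\<forall>y\<in>topspace Xf. pf y \<in> fst cp \<and> ps y = snd cp \<longrightarrow> y \<in> e)" for cp e
  have "\<forall>cp\<in>PP. \<exists>e. Ge cp e" unfolding Ge_def using key by blast
  then obtain E0 where "\<forall>cp\<in>PP. Ge cp (E0 cp)" using bchoice by blast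
  then obtain E where E: "\<forall>cp\<in>PP. E cp \<in> join_cover Xf Tf s n U \<and> (\<forall>y\<in>topspace Xf. pf y \<in> fst cp \<and> ps y = snd cp \<longrightarrow> y \<in> E cp)"
    unfolding Ge_def by blast
  have PPf: "finite PP" unfolding PP_def using C(2) Rf by simp
  have "Ncov Xf (join_cover Xf Tf s n U) \<le> card (E ` PP)"
  proof (rule Ncov_le)
    show "E ` PP \<subseteq> join_cover Xf Tf s n U" using E by blast
    show "finite (E ` PP)" using PPf by simp
    show "topspace Xf \<subseteq> \<Union> (E ` PP)"
    proof
      fix y assume y: "y \<in> topspace Xf"
      then obtain c where c: "c \<in> C" "pf y \<in> c" using C(3) pf_top by blast
      have "ps y \<in> R" unfolding R_def using y by blast
      then have "(c, ps y) \<in> PP" unfolding PP_def using c y by auto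
      then have "y \<in> E (c, ps y)" using E y c(2) by fastforce
      then show "y \<in> \<Union> (E ` PP)" using \<open>(c, ps y) \<in> PP\<close> by blast
    qed
  qed
  also have "\<dots> \<le> card PP" using card_image_le[OF PPf] .
  also have "\<dots> \<le> card (C \<times> R)" by (rule card_mono) (use C(2) Rf in \<open>auto simp: PP_def\<close>)
  also have "\<dots> = card C * card R" by (simp add: card_cartesian_product)
  also have "\<dots> \<le> Ncov X (join_cover X T s n V) * (card K * n + 1) ^ d" using C(4) cR by simp
  finally show ?thesis .
qed

end



lemma ln_ineq:
  fixes A B M d :: nat
  assumes "A \<le> B * M ^ d" "1 \<le> M"
  shows "ln (real A) \<le> ln (real B) + real d * ln (real M)"
proof (cases "A = 0")
  case True
  have "0 \<le> ln (real B)" by (rule ln_nat_nonneg)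
  moreover have "0 \<le> real d * ln (real M)" using assms(2) by simp
  ultimately show ?thesis using True by simp
next
  case False
  then have B: "B \<ge> 1" using assms(1) by (cases "B = 0") auto
  have "real A \<le> real B * real M ^ d" using assms(1) by (metis of_nat_le_iff of_nat_mult of_nat_power)
  then have "ln (real A) \<le> ln (real B * real M ^ d)" using False by (intro ln_mono) auto
  also have "\<dots> = ln (real B) + real d * ln (real M)"
    using B assms(2) by (simp add: ln_mult ln_realpow)
  finally show ?thesis .
qed

lemma limsup_zero_bound:
  fixes a b c :: "nat \<Rightarrow> real"
  assumes "\<And>n. a n \<le> b n + c n" "limsup (\<lambda>n. ereal (b n)) = 0" "c \<longlonglongrightarrow> 0"
  shows "limsup (\<lambda>n. ereal (a n)) \<le> 0"
proof -
  have "limsup (\<lambda>n. ereal (a n)) \<le> limsup (\<lambda>n. ereal (b n) + ereal (c n))"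
    by (intro Limsup_mono always_eventually allI) (use assms(1) in simp)
  also have "\<dots> \<le> limsup (\<lambda>n. ereal (b n)) + limsup (\<lambda>n. ereal (c n))"
    by (rule ereal_limsup_add_mono)
  also have "limsup (\<lambda>n. ereal (c n)) = 0"
    using lim_imp_Limsup[OF _ tendsto_ereal[OF assms(3)]] by (simp add: zero_ereal_def)
  finally show ?thesis using assms(2) by simp
qed

context mcx begin

lemma null_lift:
  assumes nX: "null_action G X T"
    and nd: "\<not> arb_large_indep G Xf Tf {z\<in>topspace Xf. ft z = 1} {z\<in>topspace Xf. ft z = -1}"
  shows "null_action G Xf Tf"
  unfolding null_action_def
proof (intro allI impI)
  fix s :: "nat \<Rightarrow> 'g" and U assume s: "\<forall>n. s n \<in> carrier G" and U: "finite_open_cover Xf U"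
  obtain V K where VK: "finite_open_cover X V" "finite K" "K \<subseteq> carrier G"
    "\<forall>v\<in>V. \<forall>y0\<in>topspace Xf. pf y0 \<in> v \<longrightarrow>
        (\<exists>u\<in>U. \<forall>y\<in>topspace Xf. pf y \<in> v \<and> (\<forall>k\<in>K. ft (Tf k y) = ft (Tf k y0)) \<longrightarrow> y \<in> u)"
    using refine[OF U] by (elim exE conjE) (rule that; assumption)
  obtain d where d: "\<forall>Q. finite Q \<longrightarrow> Q \<subseteq> carrier G \<longrightarrow>
     card ((\<lambda>y. {q\<in>Q. ft (Tf q y) = 1}) ` topspace Xf) \<le> (card Q + 1) ^ d"
    using patterns_bound[OF nd] by (elim exE) (rule that; assumption)
  have sX: "seq_entropy X T s V = 0" using nX s VK(1) unfolding null_action_def by blast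
  define Nf where "Nf n = Ncov Xf (join_cover Xf Tf s n U)" for n
  define NX where "NX n = Ncov X (join_cover X T s n V)" for n
  have bnd: "Nf n \<le> NX n * (card K * n + 1) ^ d" for n
    unfolding Nf_def NX_def by (rule count_bound[OF s VK(1) VK(2,3) VK(4) d])
  have ab: "ln (real (Nf n)) / real n \<le> ln (real (NX n)) / real n + real d * ln (real (card K) * real n + 1) / real n" for n
  proof -
    have "ln (real (Nf n)) \<le> ln (real (NX n)) + real d * ln (real (card K * n + 1))"
      by (rule ln_ineq[OF bnd]) simp
    then have "ln (real (Nf n)) / real n \<le> (ln (real (NX n)) + real d * ln (real (card K * n + 1))) / real n"
      by (rule divide_right_mono) simp
    then show ?thesis by (simp add: add_divide_distrib add.commute)
  qed
  have "limsup (\<lambda>n. ereal (ln (real (Nf n)) / real n)) \<le> 0"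
    by (rule limsup_zero_bound[OF ab _ lim_c]) (use sX in \<open>simp add: seq_entropy_def NX_def\<close>)
  moreover have "0 \<le> limsup (\<lambda>n. ereal (ln (real (Nf n)) / real n))" by (rule limsup_nonneg)
  ultimately show "seq_entropy Xf Tf s U = 0" unfolding seq_entropy_def Nf_def by simp
qed

end



lemma idx_lt: "0 < (P::nat) \<Longrightarrow> m \<le> 2 * P \<Longrightarrow> m - P - 1 < P"
  by arith

context mcx begin

lemma null_down:
  assumes nf: "null_action G Xf Tf"
  shows "null_action G X T"
  unfolding null_action_def
proof (intro allI impI)
  fix s :: "nat \<Rightarrow> 'g" and V assume s: "\<forall>n. s n \<in> carrier G" and V: "finite_open_cover X V"
  have Vf: "finite V" and Vo: "\<forall>v\<in>V. openin X v" and Vc: "topspace X \<subseteq> \<Union>V"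
    using V unfolding finite_open_cover_def by auto
  define U where "U = (\<lambda>v. {y\<in>topspace Xf. pf y \<in> v}) ` V"
  have Uf: "finite U" unfolding U_def using Vf by simp
  have Uc: "topspace Xf \<subseteq> \<Union>U"
  proof
    fix y assume "y \<in> topspace Xf"
    moreover then obtain v where "v \<in> V" "pf y \<in> v" using Vc pf_top by blast
    ultimately show "y \<in> \<Union>U" unfolding U_def by blast
  qed
  have "finite_open_cover Xf U" unfolding finite_open_cover_def
    using Uf Uc pre_open Vo unfolding U_def by blast
  then have sf: "seq_entropy Xf Tf s U = 0" using nf s unfolding null_action_def by blast
  define Nf where "Nf n = Ncov Xf (join_cover Xf Tf s n U)" for n
  define NX where "NX n = Ncov X (join_cover X T s n V)" for n
  have le: "NX n \<le> Nf n" for n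
  proof -
    have "\<exists>D\<subseteq>join_cover Xf Tf s n U. finite D \<and> topspace Xf \<subseteq> \<Union>D \<and> card D = Ncov Xf (join_cover Xf Tf s n U)"
      by (rule Ncov_mem[OF join_finite[OF Uf] join_covers]) (use s Tf_top Uc in auto)
    then obtain D where D: "D \<subseteq> join_cover Xf Tf s n U" "finite D" "topspace Xf \<subseteq> \<Union>D" "card D = Nf n"
      unfolding Nf_def by blast
    define Gc where "Gc d c \<longleftrightarrow> c \<in> join_cover X T s n V \<and> (\<forall>y\<in>d. pf y \<in> c)" for d c
    have "\<forall>d\<in>D. \<exists>c. Gc d c"
    proof
      fix d assume "d \<in> D"
      then have "d \<in> join_cover Xf Tf s n U" using D(1) by blast
      then obtain W where W: "W \<in> {1..n} \<rightarrow> U" "d = topspace Xf \<inter> (\<Inter>i\<in>{1..n}. act_pre Xf Tf (s i) (W i))"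
        unfolding join_cover_def by blast
      define Gv where "Gv i v \<longleftrightarrow> v \<in> V \<and> W i = {y\<in>topspace Xf. pf y \<in> v}" for i v
      have "\<forall>i\<in>{1..n}. \<exists>v. Gv i v" using W(1) unfolding Gv_def U_def by blast
      then obtain vv where "\<forall>i\<in>{1..n}. Gv i (vv i)" using bchoice by blast
      then have vv: "\<And>i. i \<in> {1..n} \<Longrightarrow> vv i \<in> V \<and> W i = {y\<in>topspace Xf. pf y \<in> vv i}"
        unfolding Gv_def by blast
      define c where "c = topspace X \<inter> (\<Inter>i\<in>{1..n}. act_pre X T (s i) (vv i))"
      have "vv \<in> {1..n} \<rightarrow> V" using vv by blast
      then have "c \<in> join_cover X T s n V" unfolding join_cover_def c_def by blast
      moreover have "pf y \<in> c" if y: "y \<in> d" for y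
      proof -
        have yt: "y \<in> topspace Xf" using y W(2) by blast
        have "T (s i) (pf y) \<in> vv i" if i: "i \<in> {1..n}" for i
        proof -
          have "Tf (s i) y \<in> W i" using y W(2) i unfolding act_pre_def by blast
          then have "pf (Tf (s i) y) \<in> vv i" using vv[OF i] by blast
          then show ?thesis using eqv s yt by metis
        qed
        then show ?thesis unfolding c_def act_pre_def using pf_top[OF yt] by blast
      qed
      ultimately show "\<exists>c. Gc d c" unfolding Gc_def by blast
    qed
    then obtain CC where "\<forall>d\<in>D. Gc d (CC d)" using bchoice by blast
    then have CC: "\<And>d. d \<in> D \<Longrightarrow> CC d \<in> join_cover X T s n V \<and> (\<forall>y\<in>d. pf y \<in> CC d)"
      unfolding Gc_def by blast
    have "NX n \<le> card (CC ` D)" unfolding NX_def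
    proof (rule Ncov_le)
      show "CC ` D \<subseteq> join_cover X T s n V" using CC by blast
      show "finite (CC ` D)" using D(2) by simp
      show "topspace X \<subseteq> \<Union> (CC ` D)"
      proof
        fix x assume "x \<in> topspace X"
        then obtain y where y: "y \<in> topspace Xf" "x = pf y" using pfs by blast
        then obtain d where "d \<in> D" "y \<in> d" using D(3) by blast
        then have "x \<in> CC d" using CC y(2) by blast
        then show "x \<in> \<Union> (CC ` D)" using \<open>d \<in> D\<close> by blast
      qed
    qed
    also have "\<dots> \<le> card D" using card_image_le[OF D(2)] .
    finally show ?thesis using D(4) by simp
  qed
  have ab: "ln (real (NX n)) / real n \<le> ln (real (Nf n)) / real n" for n
  proof (rule divide_right_mono)
    show "ln (real (NX n)) \<le> ln (real (Nf n))"
    proof (cases "NX n = 0")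
      case True then show ?thesis using ln_nat_nonneg by simp
    next
      case False then show ?thesis using le[of n] by (intro ln_mono) auto
    qed
  qed simp
  have "limsup (\<lambda>n. ereal (ln (real (NX n)) / real n)) \<le> limsup (\<lambda>n. ereal (ln (real (Nf n)) / real n))"
    by (intro Limsup_mono always_eventually allI) (use ab in simp)
  also have "\<dots> = 0" using sf unfolding seq_entropy_def Nf_def by simp
  finally have "limsup (\<lambda>n. ereal (ln (real (NX n)) / real n)) \<le> 0" .
  moreover have "0 \<le> limsup (\<lambda>n. ereal (ln (real (NX n)) / real n))" by (rule limsup_nonneg)
  ultimately show "seq_entropy X T s V = 0" unfolding seq_entropy_def NX_def by simp
qed

end



context mcx begin

lemma null_indep:
  assumes nf: "null_action G Xf Tf"
  shows "\<not> arb_large_indep G Xf Tf {z\<in>topspace Xf. ft z = 1} {z\<in>topspace Xf. ft z = -1}"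
proof
  define Ap where "Ap = {z\<in>topspace Xf. ft z = 1}"
  define Am where "Am = {z\<in>topspace Xf. ft z = -1}"
  assume "arb_large_indep G Xf Tf {z\<in>topspace Xf. ft z = 1} {z\<in>topspace Xf. ft z = -1}"
  then have arb: "\<forall>n::nat. \<exists>M. finite M \<and> card M \<ge> n \<and> indep_set G Xf Tf Ap Am M"
    unfolding arb_large_indep_def Ap_def Am_def .
  define GI where "GI j I \<longleftrightarrow> card I = 2 ^ j \<and> I \<subseteq> carrier G \<and>
     (\<forall>\<omega>\<in>I \<rightarrow> {1::nat, 2}. (\<Inter>t\<in>I. act_pre Xf Tf t (if \<omega> t = 1 then Ap else Am)) \<noteq> {})" for j I
  have "\<forall>j. \<exists>I. GI j I"
  proof
    fix j :: nat
    obtain M where M: "finite M" "card M \<ge> 2 ^ j" "indep_set G Xf Tf Ap Am M" using arb by blast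
    obtain I where I: "I \<subseteq> M" "card I = 2 ^ j" "finite I" by (rule obtain_subset_with_card_n[OF M(2)])
    have "I \<noteq> {}" using I(2) by auto
    then have "GI j I" using M(3) I unfolding indep_set_def GI_def by blast
    then show "\<exists>I. GI j I" by blast
  qed
  then obtain II where "\<forall>j. GI j (II j)" by (rule choice[THEN exE])
  then have II: "\<And>j. card (II j) = 2 ^ j \<and> II j \<subseteq> carrier G \<and>
     (\<forall>\<omega>\<in>II j \<rightarrow> {1::nat, 2}. (\<Inter>t\<in>II j. act_pre Xf Tf t (if \<omega> t = 1 then Ap else Am)) \<noteq> {})"
    unfolding GI_def by blast
  have IIf: "finite (II j)" "II j \<noteq> {}" for j
  proof -
    have "card (II j) > 0" using II[of j] by simp
    then show "finite (II j)" "II j \<noteq> {}" using card_gt_0_iff by blast+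
  qed
  have "\<forall>j. \<exists>h. bij_betw h {0..<(2::nat)^j} (II j)"
  proof
    fix j
    obtain h where "bij_betw h {0..<card (II j)} (II j)" using ex_bij_betw_nat_finite[OF IIf(1)] by blast
    moreover have "card (II j) = 2 ^ j" using II[of j] by blast
    ultimately show "\<exists>h. bij_betw h {0..<(2::nat)^j} (II j)" by auto
  qed
  then obtain e0 where "\<forall>j. bij_betw (e0 j) {0..<(2::nat)^j} (II j)" by (rule choice[THEN exE])
  then obtain e where e: "\<And>j. bij_betw (e j) {0..<(2::nat)^j} (II j)" by blast
  define blk where "blk m = (LEAST j. m \<le> 2 ^ Suc j)" for m :: nat
  have blk_le: "m \<le> 2 ^ Suc (blk m)" for m
  proof -
    have "m \<le> 2 ^ Suc m" using less_exp[of m] by (simp only: power_Suc)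
    then show ?thesis unfolding blk_def by (rule LeastI)
  qed
  have blk_eq: "blk m = j" if "2 ^ j < m" "m \<le> 2 ^ Suc j" for m j
    unfolding blk_def
  proof (rule Least_equality)
    show "m \<le> 2 ^ Suc j" by (rule that(2))
    fix j' assume j': "m \<le> 2 ^ Suc j'"
    show "j \<le> j'"
    proof (rule ccontr)
      assume "\<not> j \<le> j'"
      then have "Suc j' \<le> j" by simp
      then have "(2::nat) ^ Suc j' \<le> 2 ^ j" by (rule power_increasing) simp
      then show False using that(1) j' by simp
    qed
  qed
  define s where "s m = e (blk m) (m - 2 ^ blk m - 1)" for m
  have s_in: "s m \<in> carrier G" for m
  proof -
    have "m - 2 ^ blk m - 1 < 2 ^ blk m" by (rule idx_lt) (use blk_le[of m] in auto)
    then have "s m \<in> II (blk m)" unfolding s_def using e bij_betwE by fastforce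
    then show ?thesis using II by blast
  qed
  have s_block: "s (2 ^ j + 1 + i) = e j i" if "i < 2 ^ j" for i j
  proof -
    have "blk (2 ^ j + 1 + i) = j" by (rule blk_eq) (use that in auto)
    then show ?thesis unfolding s_def by simp
  qed
  define U where "U = {Ap, Am}"
  have Apo: "openin Xf Ap" unfolding Ap_def by (rule level_open[OF ftc ftv]) simp
  have Amo: "openin Xf Am" unfolding Am_def by (rule level_open[OF ftc ftv]) simp
  have Uc: "topspace Xf \<subseteq> \<Union>U" unfolding U_def Ap_def Am_def using ftv by auto
  have Uf: "finite U" unfolding U_def by simp
  have "finite_open_cover Xf U" unfolding finite_open_cover_def U_def using Apo Amo Uc U_def by auto
  then have sf: "seq_entropy Xf Tf s U = 0" using nf s_in unfolding null_action_def by blast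
  define a where "a n = ln (real (Ncov Xf (join_cover Xf Tf s n U))) / real n" for n
  have lowN: "2 ^ (2 ^ j) \<le> Ncov Xf (join_cover Xf Tf s (2 ^ Suc j) U)" for j
  proof -
    define n where "n = (2::nat) ^ Suc j"
    have "\<exists>D\<subseteq>join_cover Xf Tf s n U. finite D \<and> topspace Xf \<subseteq> \<Union>D \<and> card D = Ncov Xf (join_cover Xf Tf s n U)"
      by (rule Ncov_mem[OF join_finite[OF Uf] join_covers]) (use s_in Tf_top Uc in auto)
    then obtain D where D: "D \<subseteq> join_cover Xf Tf s n U" "finite D" "topspace Xf \<subseteq> \<Union>D"
       "card D = Ncov Xf (join_cover Xf Tf s n U)" by blast
    have sep2: False if d: "d \<in> D" "y \<in> d" "y' \<in> d" "t \<in> II j" "Tf t y \<in> Ap" "Tf t y' \<in> Am" for d y y' t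
    proof -
      obtain W where W: "W \<in> {1..n} \<rightarrow> U" "d = topspace Xf \<inter> (\<Inter>i\<in>{1..n}. act_pre Xf Tf (s i) (W i))"
        using d(1) D(1) unfolding join_cover_def by blast
      obtain i0 where i0: "i0 < 2 ^ j" "t = e j i0" using d(4) e[of j]
        by (metis atLeastLessThan_iff bij_betw_imp_surj_on imageE)
      define i where "i = 2 ^ j + 1 + i0"
      have i: "i \<in> {1..n}" "s i = t" unfolding i_def n_def using i0 s_block by auto
      have "Tf t y \<in> W i" "Tf t y' \<in> W i" using d(2,3) W(2) i unfolding act_pre_def by force+
      moreover have "W i = Ap \<or> W i = Am" using W(1) i(1) unfolding U_def by blast
      ultimately show False using d(5,6) unfolding Ap_def Am_def by auto
    qed
    define Gd where "Gd A dd \<longleftrightarrow> dd \<in> D \<and> (\<exists>y. y \<in> dd \<and> (\<forall>t\<in>II j. Tf t y \<in> (if t \<in> A then Ap else Am)))" for A dd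
    have "\<forall>A\<in>Pow (II j). \<exists>dd. Gd A dd"
    proof
      fix A assume A: "A \<in> Pow (II j)"
      define \<omega> where "\<omega> t = (if t \<in> A then 1 else 2::nat)" for t
      have "\<omega> \<in> II j \<rightarrow> {1, 2}" unfolding \<omega>_def by simp
      then obtain y where y: "y \<in> (\<Inter>t\<in>II j. act_pre Xf Tf t (if \<omega> t = 1 then Ap else Am))"
        using II[of j] by blast
      have yt: "y \<in> topspace Xf" using y IIf(2)[of j] unfolding act_pre_def by blast
      have yA: "\<forall>t\<in>II j. Tf t y \<in> (if t \<in> A then Ap else Am)"
        using y unfolding act_pre_def \<omega>_def by auto
      obtain dd where "dd \<in> D" "y \<in> dd" using D(3) yt by blast
      then show "\<exists>dd. Gd A dd" unfolding Gd_def using yA by blast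
    qed
    then obtain dd where "\<forall>A\<in>Pow (II j). Gd A (dd A)" using bchoice by blast
    then have dd: "\<And>A. A \<in> Pow (II j) \<Longrightarrow> dd A \<in> D \<and> (\<exists>y. y \<in> dd A \<and> (\<forall>t\<in>II j. Tf t y \<in> (if t \<in> A then Ap else Am)))"
      unfolding Gd_def by blast
    have inj: "inj_on dd (Pow (II j))"
    proof (rule inj_onI, rule ccontr)
      fix A B assume A: "A \<in> Pow (II j)" and B: "B \<in> Pow (II j)" and eq: "dd A = dd B" and ne: "A \<noteq> B"
      obtain y where y: "y \<in> dd A" "\<forall>t\<in>II j. Tf t y \<in> (if t \<in> A then Ap else Am)" using dd[OF A] by blast
      obtain y' where y': "y' \<in> dd B" "\<forall>t\<in>II j. Tf t y' \<in> (if t \<in> B then Ap else Am)" using dd[OF B] by blast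
      have dA: "dd A \<in> D" using dd[OF A] by blast
      from ne obtain t where "t \<in> A \<and> t \<notin> B \<or> t \<in> B \<and> t \<notin> A" by blast
      then show False
      proof
        assume t: "t \<in> A \<and> t \<notin> B"
        then have tI: "t \<in> II j" using A by blast
        have "Tf t y \<in> Ap" using bspec[OF y(2) tI] t by (simp split: if_splits)
        moreover have "Tf t y' \<in> Am" using bspec[OF y'(2) tI] t by (simp split: if_splits)
        ultimately show False using sep2[OF dA y(1) _ tI] y'(1) eq by simp
      next
        assume t: "t \<in> B \<and> t \<notin> A"
        then have tI: "t \<in> II j" using B by blast
        have "Tf t y' \<in> Ap" using bspec[OF y'(2) tI] t by (simp split: if_splits)
        moreover have "Tf t y \<in> Am" using bspec[OF y(2) tI] t by (simp split: if_splits)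
        ultimately show False using sep2[OF dA _ y(1) tI] y'(1) eq by simp
      qed
    qed
    have "card (Pow (II j)) \<le> card D" by (rule card_inj_on_le[OF inj _ D(2)]) (use dd in blast)
    moreover have "card (Pow (II j)) = 2 ^ (2 ^ j)" using card_Pow[OF IIf(1)] II by simp
    ultimately show ?thesis using D(4) unfolding n_def by simp
  qed
  have lowa: "ln 2 / 2 \<le> a (2 ^ Suc j)" for j
  proof -
    have "real (2 ^ (2 ^ j)) \<le> real (Ncov Xf (join_cover Xf Tf s (2 ^ Suc j) U))"
      using lowN[of j] by linarith
    then have "ln (real (2 ^ (2 ^ j))) \<le> ln (real (Ncov Xf (join_cover Xf Tf s (2 ^ Suc j) U)))"
      by (intro ln_mono) auto
    moreover have "ln (real (2 ^ (2 ^ j))) = real (2 ^ j) * ln 2" by (simp add: ln_realpow)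
    ultimately have "real (2 ^ j) * ln 2 \<le> ln (real (Ncov Xf (join_cover Xf Tf s (2 ^ Suc j) U)))" by simp
    then have "real (2 ^ j) * ln 2 / real (2 ^ Suc j) \<le> a (2 ^ Suc j)"
      unfolding a_def by (rule divide_right_mono) simp
    moreover have "real (2 ^ j) * ln 2 / real (2 ^ Suc j) = ln 2 / 2" by simp
    ultimately show ?thesis by simp
  qed
  define r where "r j = (2::nat) ^ Suc j" for j
  have sm: "strict_mono r" unfolding r_def by (rule strict_monoI) (simp add: power_strict_increasing)
  have "ereal (ln 2 / 2) = limsup (\<lambda>j::nat. ereal (ln 2 / 2))" by (simp add: Limsup_const)
  also have "\<dots> \<le> limsup ((\<lambda>n. ereal (a n)) \<circ> r)"
    by (intro Limsup_mono always_eventually allI) (use lowa in \<open>simp add: r_def\<close>)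
  also have "\<dots> \<le> limsup (\<lambda>n. ereal (a n))" by (rule limsup_subseq_mono[OF sm])
  also have "\<dots> = 0" using sf unfolding seq_entropy_def a_def by simp
  finally have "ln 2 / 2 \<le> (0::real)" by simp
  then show False by simp
qed

end


theorem lemma3p2:
  fixes G :: "('g, 'b) monoid_scheme" and X :: "'x topology" and T :: "'g \<Rightarrow> 'x \<Rightarrow> 'x"
    and x1 :: 'x and f :: "'x \<Rightarrow> real"
    and Xf :: "'z topology" and Tf :: "'g \<Rightarrow> 'z \<Rightarrow> 'z" and pf :: "'z \<Rightarrow> 'x" and ft :: "'z \<Rightarrow> real"
  assumes "group G" and "countable (carrier G)" and "infinite (carrier G)"
    and "compact_space X" and "metrizable_space X"
    and "cont_action G X T" and "minimal_action G X T"
    and "\<exists>x\<in>topspace X. \<exists>y\<in>topspace X. y \<notin> orbit G T x"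
    and "x1 \<in> topspace X"
    and "\<forall>g\<in>carrier G. T g x1 = x1 \<longrightarrow> g = \<one>\<^bsub>G\<^esub>"
    and "\<forall>x\<in>topspace X - {x1}. f x \<in> {1, -1}"
    and "continuous_map (subtopology X (topspace X - {x1})) euclideanreal f"
    and "\<not> (\<exists>h. continuous_map X euclideanreal h \<and> (\<forall>x\<in>topspace X - {x1}. h x = f x))"
    and "mcmahon_ext G X T x1 f Xf Tf pf ft"
    and "\<forall>z\<in>topspace Xf. ft z \<in> {1, -1}"
  shows "null_action G Xf Tf \<longleftrightarrow>
           null_action G X T \<and>
           \<not> arb_large_indep G Xf Tf {z\<in>topspace Xf. ft z = 1} {z\<in>topspace Xf. ft z = -1}"
  proof -
  interpret mcx G X T x1 f Xf Tf pf ft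
    by (rule mcx.intro[OF assms(1,4,5,6,9,13,14,15)])
  show ?thesis using null_down null_indep null_lift by blast
qed

end
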